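(* Let $A,B$ be quantum systems of dimensions $m_A,m_B$ and $\psi_{AB}$ a bipartite state with $\psi_A=\mathrm{id}_{m_A}/m_A$ and $\psi_B=\mathrm{id}_{m_B}/m_B$, and let $\mathcal{T}:\mathcal{M}(B)\to\mathcal{M}(A)$ be its Markov super-operator. For any $Q\in\mathcal{M}(B)$, the maximum $$\max\{|\mathrm{Tr}((P^\dagger\otimes Q)\psi_{AB})|: P\in\mathcal{M}(A),\ \|P\|'_2=1\}$$ equals $\|\mathcal{T}(Q)\|'_2$, and (when $\mathcal{T}(Q)\ne0$) it is achieved by $P^*=\mathcal{T}(Q)/\|\mathcal{T}(Q)\|'_2$. Consequently $$\rho(\psi_{AB})=\max\{\|\mathcal{T}(Q)\|'_2: Q\in\mathcal{M}(B),\ \mathrm{Tr}Q=0,\ \|Q\|'_2=1\}.$$ Moreover, the supremum defining $\rho(\psi_{AB})$ is achieved by a pair of Hermitian operators $(P,Q)$.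
   Context: $\mathcal{M}(A)$ is the space of linear operators on $A\cong\mathbb{C}^{m_A}$, with inner product $\langle X,Y\rangle=\frac1{m_A}\mathrm{Tr}X^\dagger Y$ and normalized 2-norm $\|X\|'_2=\langle X,X\rangle^{1/2}$ (similarly on $B$ with $1/m_B$). The Markov super-operator $\mathcal{T}:\mathcal{M}(B)\to\mathcal{M}(A)$ is defined by $\mathrm{Tr}((M^\dagger\otimes Q)\psi_{AB})=\langle M,\mathcal{T}(Q)\rangle$ for all $M\in\mathcal{M}(A)$, $Q\in\mathcal{M}(B)$ (equivalently $\mathcal{T}(Q)=m_A\mathrm{Tr}_B((\mathrm{id}\otimes Q)\psi_{AB})$). The maximal correlation is $\rho(\psi_{AB})=\sup\{|\mathrm{Tr}((P^\dagger\otimes Q)\psi_{AB})|: P\in\mathcal{M}(A),Q\in\mathcal{M}(B),\ \mathrm{Tr}P=\mathrm{Tr}Q=0,\ \|P\|'_2=\|Q\|'_2=1\}$. *)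

theory Defs
  imports Complex_Main "HOL-Library.Cardinality"
begin

text \<open>Linear operators on a finite-dimensional system with basis indexed by the
finite type 'a (so the dimension is CARD('a)) are represented by their
matrices, i.e. functions 'a => 'a => complex.  A bipartite system A tensor B
has basis indexed by 'a \<times> 'b.\<close>

type_synonym 'a qop = "'a \<Rightarrow> 'a \<Rightarrow> complex"

definition qadj :: "'a qop \<Rightarrow> 'a qop" where
  "qadj X = (\<lambda>i k. cnj (X k i))"

definition qmult :: "('a::finite) qop \<Rightarrow> 'a qop \<Rightarrow> 'a qop" where
  "qmult X Y = (\<lambda>i k. \<Sum>j\<in>UNIV. X i j * Y j k)"

definition qtr :: "('a::finite) qop \<Rightarrow> complex" where
  "qtr X = (\<Sum>i\<in>UNIV. X i i)"

definition qid :: "'a qop" where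
  "qid = (\<lambda>i k. if i = k then 1 else 0)"

definition qtensor :: "'a qop \<Rightarrow> 'b qop \<Rightarrow> ('a \<times> 'b) qop" where
  "qtensor P Q = (\<lambda>(i, j) (k, l). P i k * Q j l)"

definition qscale :: "complex \<Rightarrow> 'a qop \<Rightarrow> 'a qop" where
  "qscale c X = (\<lambda>i k. c * X i k)"

definition qhermitian :: "'a qop \<Rightarrow> bool" where
  "qhermitian X \<longleftrightarrow> qadj X = X"

definition qinner :: "('a::finite) qop \<Rightarrow> 'a qop \<Rightarrow> complex" where
  "qinner X Y = qtr (qmult (qadj X) Y) / of_nat CARD('a)"

definition qnorm2 :: "('a::finite) qop \<Rightarrow> real" where
  "qnorm2 X = sqrt (Re (qinner X X))"

definition qstate :: "('a::finite) qop \<Rightarrow> bool" where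
  "qstate \<psi> \<longleftrightarrow>
     (\<forall>v :: 'a \<Rightarrow> complex.
        Im (\<Sum>x\<in>UNIV. \<Sum>y\<in>UNIV. cnj (v x) * \<psi> x y * v y) = 0 \<and>
        Re (\<Sum>x\<in>UNIV. \<Sum>y\<in>UNIV. cnj (v x) * \<psi> x y * v y) \<ge> 0)
     \<and> qtr \<psi> = 1"

definition ptrace_B :: "('a::finite \<times> 'b::finite) qop \<Rightarrow> 'a qop" where
  "ptrace_B \<psi> = (\<lambda>i k. \<Sum>j\<in>UNIV. \<psi> (i, j) (k, j))"

definition ptrace_A :: "('a::finite \<times> 'b::finite) qop \<Rightarrow> 'b qop" where
  "ptrace_A \<psi> = (\<lambda>j l. \<Sum>i\<in>UNIV. \<psi> (i, j) (i, l))"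

definition markov :: "('a::finite \<times> 'b::finite) qop \<Rightarrow> 'b qop \<Rightarrow> 'a qop" where
  "markov \<psi> Q = qscale (of_nat CARD('a)) (ptrace_B (qmult (qtensor qid Q) \<psi>))"

definition qcorr :: "('a::finite \<times> 'b::finite) qop \<Rightarrow> 'a qop \<Rightarrow> 'b qop \<Rightarrow> complex" where
  "qcorr \<psi> P Q = qtr (qmult (qtensor (qadj P) Q) \<psi>)"

definition maxcorr :: "('a::finite \<times> 'b::finite) qop \<Rightarrow> real" where
  "maxcorr \<psi> = Sup {cmod (qcorr \<psi> P Q) | P Q.
       qtr P = 0 \<and> qtr Q = 0 \<and> qnorm2 P = 1 \<and> qnorm2 Q = 1}"

definition is_max :: "real \<Rightarrow> real set \<Rightarrow> bool" where
  "is_max x S \<longleftrightarrow> x \<in> S \<and> (\<forall>y\<in>S. y \<le> x)"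

end

theory Submission
  imports Defs "HOL-Analysis.Analysis"
begin

lemma sum_UNIV_prod:
  "(\<Sum>x\<in>(UNIV::('a::finite\<times>'b::finite) set). f x) = (\<Sum>a\<in>UNIV. \<Sum>b\<in>UNIV. f (a,b))"
  by (simp add: sum.cartesian_product UNIV_Times_UNIV[symmetric] del: UNIV_Times_UNIV)

lemma continuous_on_vec_nth'[continuous_intros]:
  "continuous_on S f \<Longrightarrow> continuous_on S (\<lambda>v. f v $ i)"
  unfolding continuous_on_def by (auto intro: tendsto_vec_nth)

lemma qcorr_expand:
  fixes \<psi> :: "('a::finite \<times> 'b::finite) qop"
  shows "qcorr \<psi> P Q = (\<Sum>i\<in>UNIV. \<Sum>j\<in>UNIV. \<Sum>k\<in>UNIV. \<Sum>l\<in>UNIV. cnj (P k i) * Q j l * \<psi> (k,l) (i,j))"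
  unfolding qcorr_def qtr_def qmult_def qtensor_def qadj_def
  by (simp add: sum_UNIV_prod sum_distrib_right)

lemma sum_delta_mult:
  fixes i :: "'a::finite"
  shows
  "(\<Sum>a\<in>UNIV. (if i = a then 1 else 0) * (f a :: complex)) = f i"
proof -
  have "(\<Sum>a\<in>UNIV. (if i = a then 1 else 0) * (f a :: complex)) = (\<Sum>a\<in>UNIV. (if i = a then f a else 0))"
    by (rule sum.cong) auto
  also have "\<dots> = f i" by simp
  finally show ?thesis .
qed

lemma sum_delta_mult2:
  fixes i :: "'a::finite" and g :: "'a \<Rightarrow> 'b::finite \<Rightarrow> complex"
  shows
  "(\<Sum>a\<in>UNIV. \<Sum>b\<in>UNIV. (if i = a then 1 else 0) * (g a b :: complex)) = (\<Sum>b\<in>UNIV. g i b)"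
  by (subst sum.swap) (simp add: sum_delta_mult)

lemma markov_expand:
  fixes \<psi> :: "('a::finite \<times> 'b::finite) qop"
  shows "markov \<psi> Q = (\<lambda>i k. of_nat CARD('a) * (\<Sum>j\<in>UNIV. \<Sum>j'\<in>UNIV. Q j j' * \<psi> (i,j') (k,j)))"
  unfolding markov_def qscale_def ptrace_B_def qmult_def qtensor_def qid_def
  by (simp add: sum_UNIV_prod mult.assoc sum_delta_mult2)

lemma qinner_expand:
  fixes X :: "('a::finite) qop"
  shows "qinner X Y = (\<Sum>i\<in>UNIV. \<Sum>j\<in>UNIV. cnj (X j i) * Y j i) / of_nat CARD('a)"
  unfolding qinner_def qtr_def qmult_def qadj_def by simp

lemma qcorr_inner:
  fixes \<psi> :: "('a::finite \<times> 'b::finite) qop"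
  shows "qcorr \<psi> P Q = qinner P (markov \<psi> Q)"
proof -
  have "qinner P (markov \<psi> Q) = (\<Sum>i\<in>UNIV. \<Sum>k\<in>UNIV. \<Sum>j\<in>UNIV. \<Sum>l\<in>UNIV. cnj (P k i) * Q j l * \<psi> (k,l) (i,j))"
    unfolding qinner_expand markov_expand
    by (simp add: sum_distrib_left sum_divide_distrib mult.assoc)
  also have "\<dots> = (\<Sum>i\<in>UNIV. \<Sum>j\<in>UNIV. \<Sum>k\<in>UNIV. \<Sum>l\<in>UNIV. cnj (P k i) * Q j l * \<psi> (k,l) (i,j))"
    by (rule sum.cong[OF refl], rule sum.swap)
  finally show ?thesis by (simp add: qcorr_expand)
qed

lemma qinner_pairs:
  fixes X :: "('a::finite) qop"
  shows "qinner X Y = (\<Sum>p\<in>UNIV. cnj (X (fst p) (snd p)) * Y (fst p) (snd p)) / of_nat CARD('a)"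
  unfolding qinner_expand sum_UNIV_prod by (subst sum.swap) simp

definition nsq :: "('a::finite) qop \<Rightarrow> real" where
  "nsq X = (\<Sum>p\<in>UNIV. (cmod (X (fst p) (snd p)))\<^sup>2)"

lemma nsq_nonneg: "nsq X \<ge> 0"
  unfolding nsq_def by (simp add: sum_nonneg)

lemma cnj_mult_self: "cnj z * z = complex_of_real ((cmod z)\<^sup>2)"
  using complex_norm_square[of z] by (simp add: mult.commute)

lemma qinner_self: 
  fixes X :: "('a::finite) qop"
  shows "qinner X X = complex_of_real (nsq X / real CARD('a))"
  unfolding qinner_pairs nsq_def
  by (simp add: cnj_mult_self)

lemma qnorm2_nsq:
  fixes X :: "('a::finite) qop"
  shows "qnorm2 X = sqrt (nsq X / real CARD('a))"
  unfolding qnorm2_def qinner_self by simp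

lemma qnorm2_nonneg: "qnorm2 X \<ge> 0"
  unfolding qnorm2_nsq by (simp add: nsq_nonneg)

lemma qinner_self_norm:
  fixes X :: "('a::finite) qop"
  shows "qinner X X = complex_of_real ((qnorm2 X)\<^sup>2)"
  unfolding qinner_self qnorm2_nsq by (simp add: nsq_nonneg)

lemma qnorm2_zero:
  fixes X :: "('a::finite) qop"
  assumes "qnorm2 X = 0" shows "X = (\<lambda>_ _. 0)"
proof -
  have "nsq X = 0" using assms unfolding qnorm2_nsq by (simp add: nsq_nonneg)
  then have "\<forall>p\<in>UNIV. (cmod (X (fst p) (snd p)))\<^sup>2 = 0"
    unfolding nsq_def by (subst (asm) sum_nonneg_eq_0_iff) auto
  then show ?thesis by (auto simp: fun_eq_iff)
qed

lemma qscale_apply: "qscale c X i k = c * X i k"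
  by (simp add: qscale_def)

lemma nsq_scale: "nsq (qscale c X) = (cmod c)\<^sup>2 * nsq X"
  unfolding nsq_def qscale_def by (simp add: norm_mult power_mult_distrib sum_distrib_left)

lemma qnorm2_scale: "qnorm2 (qscale c X) = cmod c * qnorm2 X"
  unfolding qnorm2_nsq nsq_scale by (simp add: real_sqrt_mult real_sqrt_divide)

lemma qinner_scale_left: "qinner (qscale c X) Y = cnj c * qinner X Y"
  unfolding qinner_expand qscale_def by (simp add: sum_distrib_left mult.assoc)

lemma qinner_scale_right: "qinner X (qscale c Y) = c * qinner X Y"
  unfolding qinner_expand qscale_def by (simp add: sum_distrib_left algebra_simps)

lemma markov_scale: "markov \<psi> (qscale c Q) = qscale c (markov \<psi> Q)"
  unfolding markov_expand qscale_def by (simp add: sum_distrib_left algebra_simps)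

lemma qcorr_scale: "qcorr \<psi> (qscale a P) (qscale b Q) = cnj a * b * qcorr \<psi> P Q"
  unfolding qcorr_inner markov_scale qinner_scale_left qinner_scale_right by simp

lemma qtr_scale: "qtr (qscale c X) = c * qtr X"
  unfolding qtr_def qscale_def by (simp add: sum_distrib_left)

lemma qinner_CS:
  fixes X :: "('a::finite) qop"
  shows "cmod (qinner X Y) \<le> qnorm2 X * qnorm2 Y"
proof -
  let ?f = "\<lambda>p. cmod (X (fst p) (snd p))" and ?g = "\<lambda>p. cmod (Y (fst p) (snd p))"
  have m: "real CARD('a) > 0" by simp
  have "cmod (\<Sum>p\<in>UNIV. cnj (X (fst p) (snd p)) * Y (fst p) (snd p)) \<le> (\<Sum>p\<in>UNIV. \<bar>?f p\<bar> * \<bar>?g p\<bar>)"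
    by (rule order_trans[OF norm_sum]) (simp add: norm_mult)
  also have "\<dots> \<le> L2_set ?f UNIV * L2_set ?g UNIV" by (rule L2_set_mult_ineq)
  also have "\<dots> = sqrt (nsq X) * sqrt (nsq Y)" unfolding L2_set_def nsq_def by simp
  finally have 1: "cmod (\<Sum>p\<in>UNIV. cnj (X (fst p) (snd p)) * Y (fst p) (snd p)) \<le> sqrt (nsq X) * sqrt (nsq Y)" .
  have "cmod (qinner X Y) = cmod (\<Sum>p\<in>UNIV. cnj (X (fst p) (snd p)) * Y (fst p) (snd p)) / real CARD('a)"
    unfolding qinner_pairs by (simp add: norm_divide)
  also have "\<dots> \<le> sqrt (nsq X) * sqrt (nsq Y) / real CARD('a)"
    using 1 m by (simp add: divide_right_mono)
  also have "\<dots> = qnorm2 X * qnorm2 Y"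
    unfolding qnorm2_nsq using m
    by (simp add: real_sqrt_divide real_sqrt_mult[symmetric] nsq_nonneg)
  finally show ?thesis .
qed

lemma qtr_markov:
  fixes \<psi> :: "('a::finite \<times> 'b::finite) qop"
  assumes "ptrace_A \<psi> = qscale (1 / of_nat CARD('b)) qid"
  shows "qtr (markov \<psi> Q) = of_nat CARD('a) / of_nat CARD('b) * qtr Q"
proof -
  have pa: "(\<Sum>i\<in>UNIV. \<psi> (i,j') (i,j)) = (if j' = j then 1 / of_nat CARD('b) else 0)" for j j'
    using fun_cong[OF fun_cong[OF assms, of j'], of j] by (simp add: ptrace_A_def qscale_def qid_def)
  have "qtr (markov \<psi> Q) = of_nat CARD('a) * (\<Sum>i\<in>UNIV. \<Sum>j\<in>UNIV. \<Sum>j'\<in>UNIV. Q j j' * \<psi> (i,j') (i,j))"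
    unfolding qtr_def markov_expand by (simp add: sum_distrib_left)
  also have "\<dots> = of_nat CARD('a) * (\<Sum>j\<in>UNIV. \<Sum>i\<in>UNIV. \<Sum>j'\<in>UNIV. Q j j' * \<psi> (i,j') (i,j))"
    by (subst sum.swap) (rule refl)
  also have "\<dots> = of_nat CARD('a) * (\<Sum>j\<in>UNIV. \<Sum>j'\<in>UNIV. \<Sum>i\<in>UNIV. Q j j' * \<psi> (i,j') (i,j))"
    by (subst (2) sum.swap) (rule refl)
  also have "\<dots> = of_nat CARD('a) * (\<Sum>j\<in>UNIV. \<Sum>j'\<in>UNIV. Q j j' * (\<Sum>i\<in>UNIV. \<psi> (i,j') (i,j)))"
    by (simp add: sum_distrib_left)
  also have "\<dots> = of_nat CARD('a) * (\<Sum>j\<in>UNIV. Q j j / of_nat CARD('b))"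
    unfolding pa by (simp add: if_distrib cong: if_cong)
  also have "\<dots> = of_nat CARD('a) / of_nat CARD('b) * qtr Q"
    unfolding qtr_def by (simp add: sum_divide_distrib[symmetric])
  finally show ?thesis .
qed

lemma exists_traceless_unit:
  assumes "CARD('a::finite) \<ge> 2"
  shows "\<exists>P :: 'a qop. qhermitian P \<and> qtr P = 0 \<and> qnorm2 P = 1"
proof -
  obtain a b :: 'a where ab: "a \<noteq> b"
  proof -
    have "\<not> card (UNIV::'a set) \<le> Suc 0" using assms by simp
    then show ?thesis using that by (auto simp: card_le_Suc0_iff_eq)
  qed
  define s :: real where "s = sqrt (real CARD('a) / 2)"
  define P :: "'a qop" where "P = (\<lambda>i k. if i = k then (if i = a then complex_of_real s else if i = b then - complex_of_real s else 0) else 0)"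
  have "qhermitian P" unfolding qhermitian_def qadj_def P_def by (auto simp: fun_eq_iff)
  moreover have "qtr P = 0"
  proof -
    have "qtr P = (\<Sum>i\<in>UNIV. (if i = a then complex_of_real s else 0) + (if i = b then - complex_of_real s else 0))"
      unfolding qtr_def P_def by (rule sum.cong) (use ab in auto)
    then show ?thesis by (simp add: sum.distrib)
  qed
  moreover have "qnorm2 P = 1"
  proof -
    have "nsq P = (\<Sum>p\<in>UNIV. (if p = (a,a) then s^2 else 0) + (if p = (b,b) then s^2 else 0))"
      unfolding nsq_def P_def by (rule sum.cong) (use ab in auto)
    also have "\<dots> = 2 * s^2" by (simp add: sum.distrib)
    also have "\<dots> = real CARD('a)" unfolding s_def by simp
    finally show ?thesis unfolding qnorm2_nsq by simp
  qed
  ultimately show ?thesis by blast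
qed

lemma sum_two_delta:
  fixes a b :: "'a::finite"
  shows "(\<Sum>y\<in>UNIV. f y * ((if y = a then 1 else 0) + c * (if y = b then 1 else 0))) = f a + c * (f b :: complex)"
proof -
  have "(\<Sum>y\<in>UNIV. f y * ((if y = a then 1 else 0) + c * (if y = b then 1 else 0)))
      = (\<Sum>y\<in>UNIV. (if y = a then f y else 0) + c * (if y = b then f y else 0))"
    by (rule sum.cong) (auto simp: algebra_simps)
  also have "\<dots> = f a + c * f b" proof (cases "a = b")
    case True then show ?thesis by (simp add: sum.distrib sum_distrib_left[symmetric] algebra_simps)
  next
    case False then show ?thesis by (simp add: sum.distrib sum_distrib_left[symmetric])
  qed
  finally show ?thesis .
qed

lemma sum_one_delta:
  fixes a :: "'a::finite"
  shows "(\<Sum>y\<in>UNIV. f y * (if y = a then 1 else 0)) = (f a :: complex)"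
  using sum_two_delta[of f a 0 a] by simp

lemma quad_two:
  fixes \<psi> :: "('a::finite) qop"
  shows "(\<Sum>x\<in>UNIV. \<Sum>y\<in>UNIV. cnj ((if x = a then 1 else 0) + c * (if x = b then 1 else 0)) * \<psi> x y * ((if y = a then 1 else 0) + c * (if y = b then 1 else 0)))
    = \<psi> a a + c * \<psi> a b + cnj c * \<psi> b a + cnj c * c * \<psi> b b"
proof -
  define v :: "'a \<Rightarrow> complex" where "v = (\<lambda>z. (if z = a then 1 else 0) + c * (if z = b then 1 else 0))"
  define w :: "'a \<Rightarrow> complex" where "w = (\<lambda>z. (if z = a then 1 else 0) + cnj c * (if z = b then 1 else 0))"
  have cv: "cnj (v x) = w x" for x unfolding v_def w_def by simp
  have inner: "(\<Sum>y\<in>UNIV. \<psi> x y * v y) = \<psi> x a + c * \<psi> x b" for x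
    unfolding v_def by (rule sum_two_delta)
  have "(\<Sum>x\<in>UNIV. \<Sum>y\<in>UNIV. cnj (v x) * \<psi> x y * v y) = (\<Sum>x\<in>UNIV. (\<psi> x a + c * \<psi> x b) * w x)"
  proof (rule sum.cong[OF refl])
    fix x
    have "(\<Sum>y\<in>UNIV. cnj (v x) * \<psi> x y * v y) = cnj (v x) * (\<Sum>y\<in>UNIV. \<psi> x y * v y)"
      by (simp add: sum_distrib_left mult.assoc)
    also have "\<dots> = w x * (\<psi> x a + c * \<psi> x b)" by (simp only: inner cv)
    finally show "(\<Sum>y\<in>UNIV. cnj (v x) * \<psi> x y * v y) = (\<psi> x a + c * \<psi> x b) * w x"
      by (simp only: mult.commute)
  qed
  also have "\<dots> = \<psi> a a + c * \<psi> a b + cnj c * \<psi> b a + cnj c * c * \<psi> b b"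
    unfolding w_def by (subst sum_two_delta) (simp add: algebra_simps)
  finally show ?thesis unfolding v_def by simp
qed

lemma quad_one:
  fixes \<psi> :: "('a::finite) qop"
  shows "(\<Sum>x\<in>UNIV. \<Sum>y\<in>UNIV. cnj (if x = a then 1 else 0) * \<psi> x y * (if y = a then 1 else 0)) = \<psi> a a"
  using quad_two[of a 0 a \<psi>] by simp

lemma qstate_herm:
  fixes \<psi> :: "('a::finite) qop"
  assumes "qstate \<psi>"
  shows "\<psi> y x = cnj (\<psi> x y)"
proof -
  have im: "Im (\<Sum>x\<in>UNIV. \<Sum>y\<in>UNIV. cnj (v x) * \<psi> x y * v y) = 0" for v
    using assms unfolding qstate_def by blast
  show ?thesis
  proof (cases "x = y")
    case True
    have "Im (\<psi> x x) = 0"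
      using im[of "\<lambda>z. if z = x then 1 else 0"] by (simp only: quad_one)
    then show ?thesis using True by (simp add: complex_eq_iff)
  next
    case False
    have 1: "Im (\<psi> x x + 1 * \<psi> x y + cnj 1 * \<psi> y x + cnj 1 * 1 * \<psi> y y) = 0"
      using im[of "\<lambda>z. (if z = x then 1 else 0) + 1 * (if z = y then 1 else 0)"] 
      by (simp only: quad_two)
    have 2: "Im (\<psi> x x + \<i> * \<psi> x y + cnj \<i> * \<psi> y x + cnj \<i> * \<i> * \<psi> y y) = 0"
      using im[of "\<lambda>z. (if z = x then 1 else 0) + \<i> * (if z = y then 1 else 0)"] 
      by (simp only: quad_two)
    have d: "Im (\<psi> x x) = 0" "Im (\<psi> y y) = 0"
      using im[of "\<lambda>z. if z = x then 1 else 0"] im[of "\<lambda>z. if z = y then 1 else 0"]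
      by (simp_all only: quad_one)
    show ?thesis using 1 2 d by (simp add: complex_eq_iff)
  qed
qed


lemma exists_max_markov:
  fixes \<psi> :: "('a::finite \<times> 'b::finite) qop"
  assumes "CARD('b) \<ge> 2"
  shows "\<exists>Q0::'b qop. qtr Q0 = 0 \<and> qnorm2 Q0 = 1 \<and>
           (\<forall>Q. qtr Q = 0 \<and> qnorm2 Q = 1 \<longrightarrow> qnorm2 (markov \<psi> Q) \<le> qnorm2 (markov \<psi> Q0))"
proof -
  define toq :: "complex^('b\<times>'b) \<Rightarrow> 'b qop" where "toq v = (\<lambda>j l. v $ (j,l))" for v
  define K where "K = {v. qtr (toq v) = 0 \<and> qnorm2 (toq v) = 1}"
  have toq_from: "toq (\<chi> p. Q (fst p) (snd p)) = Q" for Q unfolding toq_def by simp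
  have nsq_toq: "nsq (toq v) = (norm v)\<^sup>2" for v
    unfolding nsq_def toq_def norm_vec_def L2_set_def by (simp add: sum_nonneg)
  have bnd: "bounded K"
    unfolding bounded_iff
  proof (intro exI ballI)
    fix v assume "v \<in> K"
    then have "qnorm2 (toq v) = 1" unfolding K_def by simp
    then have "sqrt (nsq (toq v) / real CARD('b)) = 1" unfolding qnorm2_nsq .
    then have "nsq (toq v) / real CARD('b) = 1" using real_sqrt_eq_1_iff by blast
    then have "nsq (toq v) = real CARD('b)" by (metis divide_eq_1_iff)
    then have "(norm v)\<^sup>2 = real CARD('b)" by (simp add: nsq_toq)
    then show "norm v \<le> sqrt (real CARD('b))" by (metis norm_ge_zero real_sqrt_unique order_refl)
  qed
  have cont_tr: "continuous_on UNIV (\<lambda>v. qtr (toq v))" unfolding qtr_def toq_def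
    by (intro continuous_intros)
  have cont_n: "continuous_on UNIV (\<lambda>v. qnorm2 (toq v))" unfolding qnorm2_def qinner_expand toq_def
    by (intro continuous_intros) auto
  have "closed K" unfolding K_def
    by (intro closed_Collect_conj closed_Collect_eq cont_tr cont_n continuous_on_const)
  then have cK: "compact K" using bnd by (simp add: compact_eq_bounded_closed)
  obtain P :: "'b qop" where P: "qhermitian P" "qtr P = 0" "qnorm2 P = 1" using exists_traceless_unit[OF assms] by blast
  have "(\<chi> p. P (fst p) (snd p)) \<in> K" unfolding K_def using P toq_from by simp
  then have ne: "K \<noteq> {}" by blast
  have cF: "continuous_on K (\<lambda>v. qnorm2 (markov \<psi> (toq v)))"
    unfolding qnorm2_def qinner_expand markov_expand toq_def
    by (intro continuous_intros) auto
  obtain v0 where v0: "v0 \<in> K" "\<forall>v\<in>K. qnorm2 (markov \<psi> (toq v)) \<le> qnorm2 (markov \<psi> (toq v0))"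
    using continuous_attains_sup[OF cK ne cF] by blast
  show ?thesis
  proof (intro exI conjI allI impI)
    show "qtr (toq v0) = 0" "qnorm2 (toq v0) = 1" using v0(1) unfolding K_def by auto
    fix Q :: "'b qop" assume "qtr Q = 0 \<and> qnorm2 Q = 1"
    then have "(\<chi> p. Q (fst p) (snd p)) \<in> K" unfolding K_def using toq_from by simp
    then show "qnorm2 (markov \<psi> Q) \<le> qnorm2 (markov \<psi> (toq v0))"
      using v0(2) toq_from by metis
  qed
qed

lemma qtr_qmult_adj:
  fixes \<psi> T T' :: "('c::finite) qop"
  assumes h: "\<And>x y. \<psi> y x = cnj (\<psi> x y)" and t: "\<And>x y. T' x y = cnj (T y x)"
  shows "qtr (qmult T' \<psi>) = cnj (qtr (qmult T \<psi>))"
proof -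
  have "cnj (qtr (qmult T \<psi>)) = (\<Sum>x\<in>UNIV. \<Sum>y\<in>UNIV. cnj (T x y) * \<psi> x y)"
  proof -
    have hc: "cnj (\<psi> y x) = \<psi> x y" for x y using h[of x y] by simp
    show ?thesis unfolding qtr_def qmult_def by (simp add: cnj_sum hc)
  qed
  also have "\<dots> = (\<Sum>y\<in>UNIV. \<Sum>x\<in>UNIV. cnj (T x y) * \<psi> x y)" by (rule sum.swap)
  also have "\<dots> = qtr (qmult T' \<psi>)" unfolding qtr_def qmult_def t by simp
  finally show ?thesis by simp
qed

lemma qcorr_adj:
  fixes \<psi> :: "('a::finite \<times> 'b::finite) qop"
  assumes h: "\<And>x y. \<psi> y x = cnj (\<psi> x y)"
  shows "qcorr \<psi> (qadj P) (qadj Q) = cnj (qcorr \<psi> P Q)"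
  unfolding qcorr_def
  by (rule qtr_qmult_adj[OF h]) (auto simp: qtensor_def qadj_def)

definition h1 :: "'a qop \<Rightarrow> 'a qop" where "h1 P = (\<lambda>i k. (P i k + cnj (P k i)) / 2)"
definition h2 :: "'a qop \<Rightarrow> 'a qop" where "h2 P = (\<lambda>i k. \<i> * (cnj (P k i) - P i k) / 2)"

lemma h1_herm: "qhermitian (h1 P)"
  unfolding qhermitian_def qadj_def h1_def by (auto simp: fun_eq_iff add.commute)

lemma h2_herm: "qhermitian (h2 P)"
  unfolding qhermitian_def qadj_def h2_def by (auto simp: fun_eq_iff complex_eq_iff field_simps)

lemma h1_tr: "qtr P = 0 \<Longrightarrow> qtr (h1 P) = 0"
  unfolding qtr_def h1_def by (simp add: sum.distrib sum_divide_distrib[symmetric] cnj_sum[symmetric])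

lemma h2_tr: "qtr P = 0 \<Longrightarrow> qtr (h2 P) = 0"
  unfolding qtr_def h2_def by (simp add: sum_subtractf sum_divide_distrib[symmetric] sum_distrib_left[symmetric] cnj_sum[symmetric])

lemma h_pointwise: "(cmod ((a + cnj b) / 2))\<^sup>2 + (cmod (\<i> * (cnj b - a) / 2))\<^sup>2 = ((cmod a)\<^sup>2 + (cmod b)\<^sup>2) / 2"
  unfolding cmod_power2 by (simp add: power2_eq_square field_simps)

lemma nsq_swap: "(\<Sum>p\<in>(UNIV::('a::finite\<times>'a) set). (f (snd p) (fst p)::real)) = (\<Sum>p\<in>UNIV. f (fst p) (snd p))"
  unfolding sum_UNIV_prod by (subst sum.swap) simp

lemma nsq_h: "nsq (h1 P) + nsq (h2 P) = nsq P"
proof -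
  have "nsq (h1 P) + nsq (h2 P) = (\<Sum>p\<in>UNIV. ((cmod (P (fst p) (snd p)))\<^sup>2 + (cmod (P (snd p) (fst p)))\<^sup>2) / 2)"
    unfolding nsq_def h1_def h2_def sum.distrib[symmetric] by (rule sum.cong[OF refl], rule h_pointwise)
  also have "\<dots> = (nsq P + nsq P) / 2"
    unfolding nsq_def sum_divide_distrib[symmetric] sum.distrib nsq_swap[of "\<lambda>a b. (cmod (P a b))\<^sup>2"] ..
  finally show ?thesis by simp
qed

lemma qcorr_comb:
  fixes \<psi> :: "('a::finite \<times> 'b::finite) qop"
  shows "c1 * qcorr \<psi> P1 Q1 + c2 * qcorr \<psi> P2 Q2 =
    (\<Sum>i\<in>UNIV. \<Sum>j\<in>UNIV. \<Sum>k\<in>UNIV. \<Sum>l\<in>UNIV. (c1 * cnj (P1 k i) * Q1 j l + c2 * cnj (P2 k i) * Q2 j l) * \<psi> (k,l) (i,j))"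
  unfolding qcorr_expand by (simp add: sum_distrib_left sum.distrib[symmetric] algebra_simps)

lemma h_corr_pointwise:
  "cnj p * q + cnj (cnj p') * cnj q' = 2 * cnj ((p + cnj p') / 2) * ((q + cnj q') / 2) + 2 * cnj (\<i> * (cnj p' - p) / 2) * (\<i> * (cnj q' - q) / 2)"
  by (simp add: complex_eq_iff field_simps)

lemma qcorr_h:
  fixes \<psi> :: "('a::finite \<times> 'b::finite) qop"
  shows "qcorr \<psi> P Q + qcorr \<psi> (qadj P) (qadj Q) = 2 * qcorr \<psi> (h1 P) (h1 Q) + 2 * qcorr \<psi> (h2 P) (h2 Q)"
  using qcorr_comb[of 1 \<psi> P Q 1 "qadj P" "qadj Q"] qcorr_comb[of 2 \<psi> "h1 P" "h1 Q" 2 "h2 P" "h2 Q"]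
  unfolding qadj_def h1_def h2_def
  by (simp only: h_corr_pointwise mult_1) 


lemma qcorr_zero_right: "qcorr \<psi> P (\<lambda>_ _. 0) = 0"
  unfolding qcorr_expand by simp

lemma qcorr_zero_left: "qcorr \<psi> (\<lambda>_ _. 0) Q = 0"
  unfolding qcorr_expand by simp

lemma qnorm2_zero_fun: "qnorm2 (\<lambda>(_::'a::finite) (_::'a). 0) = 0"
  unfolding qnorm2_nsq nsq_def by simp

lemma qnorm2_pos: "X \<noteq> (\<lambda>_ _. 0) \<Longrightarrow> qnorm2 X > 0"
  using qnorm2_zero[of X] qnorm2_nonneg[of X] by linarith

lemma qscale_qscale: "qscale a (qscale b X) = qscale (a * b) X"
  unfolding qscale_def by (simp add: mult.assoc)

lemma qscale_1: "qscale 1 X = X"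
  unfolding qscale_def by simp

lemma qherm_scale: "qhermitian X \<Longrightarrow> qhermitian (qscale (complex_of_real r) X)"
  unfolding qhermitian_def qadj_def qscale_def by (auto simp: fun_eq_iff dest: fun_cong)

lemma normalize_unit:
  fixes X :: "('a::finite) qop"
  assumes "qnorm2 X > 0"
  shows "qnorm2 (qscale (1 / complex_of_real (qnorm2 X)) X) = 1"
    and "qinner (qscale (1 / complex_of_real (qnorm2 X)) X) X = complex_of_real (qnorm2 X)"
proof -
  show "qnorm2 (qscale (1 / complex_of_real (qnorm2 X)) X) = 1"
    unfolding qnorm2_scale using assms by (simp add: norm_divide)
  show "qinner (qscale (1 / complex_of_real (qnorm2 X)) X) X = complex_of_real (qnorm2 X)"
    unfolding qinner_scale_left qinner_self_norm using assms by (simp add: power2_eq_square)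
qed

theorem proposition3p10:
  fixes \<psi> :: "('a::finite \<times> 'b::finite) qop"
  assumes "CARD('a) \<ge> 2" and "CARD('b) \<ge> 2"
    and "qstate \<psi>"
    and "ptrace_B \<psi> = qscale (1 / of_nat CARD('a)) qid"
    and "ptrace_A \<psi> = qscale (1 / of_nat CARD('b)) qid"
  shows "(\<forall>Q :: 'b qop.
            is_max (qnorm2 (markov \<psi> Q)) {cmod (qcorr \<psi> P Q) | P. qnorm2 P = 1}
          \<and> (markov \<psi> Q \<noteq> (\<lambda>_ _. 0) \<longrightarrow>
               qnorm2 (qscale (1 / complex_of_real (qnorm2 (markov \<psi> Q))) (markov \<psi> Q)) = 1
             \<and> cmod (qcorr \<psi> (qscale (1 / complex_of_real (qnorm2 (markov \<psi> Q))) (markov \<psi> Q)) Q)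
                 = qnorm2 (markov \<psi> Q)))
       \<and> is_max (maxcorr \<psi>) {qnorm2 (markov \<psi> Q) | Q. qtr Q = 0 \<and> qnorm2 Q = 1}
       \<and> (\<exists>P Q. qhermitian P \<and> qhermitian Q \<and> qtr P = 0 \<and> qtr Q = 0
                \<and> qnorm2 P = 1 \<and> qnorm2 Q = 1 \<and> cmod (qcorr \<psi> P Q) = maxcorr \<psi>)"
proof -
  have herm: "\<And>x y. \<psi> y x = cnj (\<psi> x y)" using qstate_herm[OF assms(3)] by blast
  have CS1: "cmod (qcorr \<psi> P Q) \<le> qnorm2 P * qnorm2 (markov \<psi> Q)" for P Q
    unfolding qcorr_inner by (rule qinner_CS)
  obtain PA :: "'a qop" where PA: "qhermitian PA" "qtr PA = 0" "qnorm2 PA = 1"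
    using exists_traceless_unit[OF assms(1)] by blast
  obtain QB :: "'b qop" where QB: "qhermitian QB" "qtr QB = 0" "qnorm2 QB = 1"
    using exists_traceless_unit[OF assms(2)] by blast
  define Pst where "Pst Q = qscale (1 / complex_of_real (qnorm2 (markov \<psi> Q))) (markov \<psi> Q)" for Q
  have opt: "qnorm2 (Pst Q) = 1 \<and> cmod (qcorr \<psi> (Pst Q) Q) = qnorm2 (markov \<psi> Q)"
    if "markov \<psi> Q \<noteq> (\<lambda>_ _. 0)" for Q
  proof -
    have pos: "qnorm2 (markov \<psi> Q) > 0" using qnorm2_pos[OF that] .
    show ?thesis unfolding Pst_def qcorr_inner normalize_unit[OF pos] using pos by simp
  qed
  have part1: "\<forall>Q :: 'b qop.
            is_max (qnorm2 (markov \<psi> Q)) {cmod (qcorr \<psi> P Q) | P. qnorm2 P = 1}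
          \<and> (markov \<psi> Q \<noteq> (\<lambda>_ _. 0) \<longrightarrow>
               qnorm2 (qscale (1 / complex_of_real (qnorm2 (markov \<psi> Q))) (markov \<psi> Q)) = 1
             \<and> cmod (qcorr \<psi> (qscale (1 / complex_of_real (qnorm2 (markov \<psi> Q))) (markov \<psi> Q)) Q)
                 = qnorm2 (markov \<psi> Q))"
  proof (intro allI conjI impI)
    fix Q :: "'b qop"
    show "is_max (qnorm2 (markov \<psi> Q)) {cmod (qcorr \<psi> P Q) | P. qnorm2 P = 1}"
      unfolding is_max_def
    proof
      show "qnorm2 (markov \<psi> Q) \<in> {cmod (qcorr \<psi> P Q) | P. qnorm2 P = 1}"
      proof (cases "markov \<psi> Q = (\<lambda>_ _. 0)")
        case True
        have "qcorr \<psi> PA Q = 0" unfolding qcorr_inner True qinner_expand by simp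
        moreover have "qnorm2 (markov \<psi> Q) = 0" unfolding True by (rule qnorm2_zero_fun)
        ultimately show ?thesis using PA(3) by force
      next
        case False
        then show ?thesis using opt[OF False] by force
      qed
      show "\<forall>y\<in>{cmod (qcorr \<psi> P Q) | P. qnorm2 P = 1}. y \<le> qnorm2 (markov \<psi> Q)"
      proof
        fix y assume "y \<in> {cmod (qcorr \<psi> P Q) | P. qnorm2 P = 1}"
        then obtain P where "y = cmod (qcorr \<psi> P Q)" "qnorm2 P = 1" by blast
        then show "y \<le> qnorm2 (markov \<psi> Q)" using CS1[of P Q] by simp
      qed
    qed
  next
    fix Q :: "'b qop"
    assume "markov \<psi> Q \<noteq> (\<lambda>_ _. 0)"
    from opt[OF this] show "qnorm2 (qscale (1 / complex_of_real (qnorm2 (markov \<psi> Q))) (markov \<psi> Q)) = 1"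
        "cmod (qcorr \<psi> (qscale (1 / complex_of_real (qnorm2 (markov \<psi> Q))) (markov \<psi> Q)) Q) = qnorm2 (markov \<psi> Q)"
      unfolding Pst_def by auto
  qed
  have trT: "qtr (markov \<psi> Q) = 0" if "qtr Q = 0" for Q
    using qtr_markov[OF assms(5), of Q] that by simp
  obtain Q0 :: "'b qop" where Q0: "qtr Q0 = 0" "qnorm2 Q0 = 1"
    "\<And>Q. qtr Q = 0 \<and> qnorm2 Q = 1 \<Longrightarrow> qnorm2 (markov \<psi> Q) \<le> qnorm2 (markov \<psi> Q0)"
    using exists_max_markov[OF assms(2), of \<psi>] by blast
  define \<rho> where "\<rho> = qnorm2 (markov \<psi> Q0)"
  define C where "C = {cmod (qcorr \<psi> P Q) | P Q. qtr P = 0 \<and> qtr Q = 0 \<and> qnorm2 P = 1 \<and> qnorm2 Q = 1}"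
  have inC: "qnorm2 (markov \<psi> Q) \<in> C" if "qtr Q = 0" "qnorm2 Q = 1" for Q
  proof (cases "markov \<psi> Q = (\<lambda>_ _. 0)")
    case True
    have "qcorr \<psi> PA Q = 0" unfolding qcorr_inner True qinner_expand by simp
    moreover have "qnorm2 (markov \<psi> Q) = 0" unfolding True by (rule qnorm2_zero_fun)
    ultimately show ?thesis unfolding C_def using PA that by force
  next
    case False
    have "qtr (Pst Q) = 0" unfolding Pst_def qtr_scale trT[OF that(1)] by simp
    then show ?thesis unfolding C_def using opt[OF False] that by force
  qed
  have leC: "x \<le> \<rho>" if "x \<in> C" for x
  proof -
    obtain P Q where PQ: "x = cmod (qcorr \<psi> P Q)" "qtr P = 0" "qtr Q = 0" "qnorm2 P = 1" "qnorm2 Q = 1"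
      using \<open>x \<in> C\<close> unfolding C_def by blast
    have "x \<le> qnorm2 (markov \<psi> Q)" using CS1[of P Q] PQ by simp
    also have "\<dots> \<le> \<rho>" unfolding \<rho>_def using Q0(3) PQ by blast
    finally show ?thesis .
  qed
  have mc: "maxcorr \<psi> = \<rho>"
    unfolding maxcorr_def C_def[symmetric] \<rho>_def
    by (rule cSup_eq_maximum[OF inC[OF Q0(1,2)]]) (use leC \<rho>_def in auto)
  have part2: "is_max (maxcorr \<psi>) {qnorm2 (markov \<psi> Q) | Q. qtr Q = 0 \<and> qnorm2 Q = 1}"
    unfolding is_max_def mc \<rho>_def using Q0 by blast
  have bndQ: "qnorm2 (markov \<psi> Q) \<le> \<rho> * qnorm2 Q" if "qtr Q = 0" for Q
  proof (cases "qnorm2 Q = 0")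
    case True
    then have "Q = (\<lambda>_ _. 0)" by (rule qnorm2_zero)
    then have "markov \<psi> Q = qscale 0 (markov \<psi> Q)" using markov_scale[of \<psi> 0 Q]
      by (simp add: qscale_def)
    then have "qnorm2 (markov \<psi> Q) = 0" by (metis qnorm2_scale norm_zero mult_zero_left)
    then show ?thesis using True by simp
  next
    case False
    then have pos: "qnorm2 Q > 0" using qnorm2_nonneg[of Q] by linarith
    define Q' where "Q' = qscale (1 / complex_of_real (qnorm2 Q)) Q"
    have Q'1: "qnorm2 Q' = 1" unfolding Q'_def by (rule normalize_unit(1)[OF pos])
    have Q'0: "qtr Q' = 0" unfolding Q'_def qtr_scale that by simp
    have QQ': "Q = qscale (complex_of_real (qnorm2 Q)) Q'"
      unfolding Q'_def qscale_qscale using pos by (simp add: qscale_1)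
    have "qnorm2 (markov \<psi> Q) = qnorm2 Q * qnorm2 (markov \<psi> Q')"
      by (subst QQ') (simp add: markov_scale qnorm2_scale qnorm2_nonneg)
    also have "\<dots> \<le> qnorm2 Q * \<rho>" unfolding \<rho>_def
      using Q0(3)[of Q'] Q'0 Q'1 pos by (simp add: mult_left_mono)
    finally show ?thesis by (simp add: mult.commute)
  qed
  have bnd: "cmod (qcorr \<psi> P Q) \<le> \<rho> * (qnorm2 P * qnorm2 Q)" if "qtr P = 0" "qtr Q = 0" for P Q
  proof -
    have "cmod (qcorr \<psi> P Q) \<le> qnorm2 P * qnorm2 (markov \<psi> Q)" by (rule CS1)
    also have "\<dots> \<le> qnorm2 P * (\<rho> * qnorm2 Q)"
      by (rule mult_left_mono[OF bndQ[OF that(2)] qnorm2_nonneg])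
    finally show ?thesis by (simp add: algebra_simps)
  qed
  have rho_nn: "\<rho> \<ge> 0" unfolding \<rho>_def by (rule qnorm2_nonneg)
  have part3: "\<exists>P Q. qhermitian P \<and> qhermitian Q \<and> qtr P = 0 \<and> qtr Q = 0
                \<and> qnorm2 P = 1 \<and> qnorm2 Q = 1 \<and> cmod (qcorr \<psi> P Q) = \<rho>"
  proof (cases "\<rho> = 0")
    case True
    have "cmod (qcorr \<psi> PA QB) \<le> 0" using bnd[OF PA(2) QB(2)] PA QB True by simp
    then have "cmod (qcorr \<psi> PA QB) = \<rho>" using True by simp
    then show ?thesis using PA QB by blast
  next
    case False
    then have rpos: "\<rho> > 0" using rho_nn by simp
    have pick: "\<exists>P Q. qhermitian P \<and> qhermitian Q \<and> qtr P = 0 \<and> qtr Q = 0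
                \<and> qnorm2 P = 1 \<and> qnorm2 Q = 1 \<and> cmod (qcorr \<psi> P Q) = \<rho>"
      if A: "qhermitian A" "qtr A = 0" and B: "qhermitian B" "qtr B = 0"
        and ap: "qnorm2 A > 0" and bp: "qnorm2 B > 0"
        and eq: "cmod (qcorr \<psi> A B) = \<rho> * qnorm2 A * qnorm2 B"
      for A :: "'a qop" and B :: "'b qop"
    proof (intro exI conjI)
      let ?P = "qscale (complex_of_real (1 / qnorm2 A)) A" and ?Q = "qscale (complex_of_real (1 / qnorm2 B)) B"
      show "qhermitian ?P" using A(1) by (rule qherm_scale)
      show "qhermitian ?Q" using B(1) by (rule qherm_scale)
      show "qtr ?P = 0" "qtr ?Q = 0" using A B by (simp_all add: qtr_scale)
      show "qnorm2 ?P = 1" "qnorm2 ?Q = 1" using ap bp by (simp_all add: qnorm2_scale norm_divide)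
      show "cmod (qcorr \<psi> ?P ?Q) = \<rho>" unfolding qcorr_scale using ap bp eq
        by (simp add: norm_mult norm_divide)
    qed
    obtain P1 Q1 where PQ1: "qtr P1 = 0" "qtr Q1 = 0" "qnorm2 P1 = 1" "qnorm2 Q1 = 1"
      "cmod (qcorr \<psi> P1 Q1) = \<rho>"
      using inC[OF Q0(1,2)] unfolding C_def \<rho>_def by auto
    define z where "z = qcorr \<psi> P1 Q1"
    define Q where "Q = qscale (cnj z / complex_of_real \<rho>) Q1"
    have Qtr: "qtr Q = 0" unfolding Q_def qtr_scale PQ1 by simp
    have Qn: "qnorm2 Q = 1" unfolding Q_def qnorm2_scale PQ1(4) using PQ1(5) rpos
      by (simp add: norm_divide z_def)
    have cPQ: "qcorr \<psi> P1 Q = complex_of_real \<rho>"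
    proof -
      have "qcorr \<psi> P1 Q = qcorr \<psi> (qscale 1 P1) Q" by (simp add: qscale_1)
      also have "\<dots> = cnj z / complex_of_real \<rho> * z" unfolding Q_def qcorr_scale z_def by simp
      also have "\<dots> = complex_of_real ((cmod z)\<^sup>2 / \<rho>)" by (simp add: cnj_mult_self)
      also have "\<dots> = complex_of_real \<rho>" using PQ1(5) rpos unfolding z_def by (simp add: power2_eq_square)
      finally show ?thesis .
    qed
    define a1 where "a1 = qnorm2 (h1 P1)"
    define a2 where "a2 = qnorm2 (h2 P1)"
    define b1 where "b1 = qnorm2 (h1 Q)"
    define b2 where "b2 = qnorm2 (h2 Q)"
    have sq: "x\<^sup>2 + y\<^sup>2 = 1" if "qnorm2 X = 1" "x = qnorm2 (h1 X)" "y = qnorm2 (h2 X)" for X :: "'c::finite qop" and x y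
    proof -
      have "nsq X = real CARD('c)" using that(1) unfolding qnorm2_nsq
        by (metis divide_eq_1_iff real_sqrt_eq_1_iff)
      then show ?thesis using that nsq_h[of X] unfolding qnorm2_nsq
        by (simp add: nsq_nonneg add_divide_distrib[symmetric])
    qed
    have a12: "a1\<^sup>2 + a2\<^sup>2 = 1" using sq[OF PQ1(3) a1_def a2_def] .
    have b12: "b1\<^sup>2 + b2\<^sup>2 = 1" using sq[OF Qn b1_def b2_def] .
    have sumc: "qcorr \<psi> (h1 P1) (h1 Q) + qcorr \<psi> (h2 P1) (h2 Q) = complex_of_real \<rho>"
    proof -
      have "2 * (qcorr \<psi> (h1 P1) (h1 Q) + qcorr \<psi> (h2 P1) (h2 Q)) = 2 * complex_of_real \<rho>"
        using qcorr_h[of \<psi> P1 Q] qcorr_adj[where \<psi>=\<psi> and P=P1 and Q=Q, OF herm] cPQ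
        by (simp add: distrib_left)
      then show ?thesis by (metis mult_cancel_left zero_neq_numeral)
    qed
    have c1: "cmod (qcorr \<psi> (h1 P1) (h1 Q)) \<le> \<rho> * (a1 * b1)"
      unfolding a1_def b1_def by (rule bnd) (simp_all add: h1_tr PQ1 Qtr)
    have c2: "cmod (qcorr \<psi> (h2 P1) (h2 Q)) \<le> \<rho> * (a2 * b2)"
      unfolding a2_def b2_def by (rule bnd) (simp_all add: h2_tr PQ1 Qtr)
    have ab: "a1 * b1 + a2 * b2 \<le> 1"
      using a12 b12 sum_squares_ge_zero[of "a1 - b1" "a2 - b2"]
      by (simp add: power2_eq_square algebra_simps)
    have "\<rho> = Re (qcorr \<psi> (h1 P1) (h1 Q)) + Re (qcorr \<psi> (h2 P1) (h2 Q))"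
      using arg_cong[OF sumc, of Re] by simp
    also have "\<dots> \<le> cmod (qcorr \<psi> (h1 P1) (h1 Q)) + cmod (qcorr \<psi> (h2 P1) (h2 Q))"
      by (intro add_mono complex_Re_le_cmod)
    finally have tot: "\<rho> \<le> cmod (qcorr \<psi> (h1 P1) (h1 Q)) + cmod (qcorr \<psi> (h2 P1) (h2 Q))" .
    have e1: "cmod (qcorr \<psi> (h1 P1) (h1 Q)) = \<rho> * a1 * b1"
      and e2: "cmod (qcorr \<psi> (h2 P1) (h2 Q)) = \<rho> * a2 * b2"
      and e3: "a1 * b1 + a2 * b2 = 1"
    proof -
      have "\<rho> * (a1 * b1 + a2 * b2) \<le> \<rho>" using ab rpos by (simp add: mult_left_le)
      then have "\<rho> \<le> \<rho> * (a1 * b1) + \<rho> * (a2 * b2)" using tot c1 c2 by (simp add: algebra_simps)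
      then show "cmod (qcorr \<psi> (h1 P1) (h1 Q)) = \<rho> * a1 * b1"
        "cmod (qcorr \<psi> (h2 P1) (h2 Q)) = \<rho> * a2 * b2" using tot c1 c2 \<open>\<rho> * (a1 * b1 + a2 * b2) \<le> \<rho>\<close>
        by (simp_all add: algebra_simps)
      have "\<rho> * 1 \<le> \<rho> * (a1 * b1 + a2 * b2)" using \<open>\<rho> \<le> \<rho> * (a1 * b1) + \<rho> * (a2 * b2)\<close>
        by (simp add: algebra_simps)
      then have "1 \<le> a1 * b1 + a2 * b2" using rpos by (simp add: mult_le_cancel_left_pos)
      then show "a1 * b1 + a2 * b2 = 1" using ab by simp
    qed
    have nn: "a1 \<ge> 0" "a2 \<ge> 0" "b1 \<ge> 0" "b2 \<ge> 0" unfolding a1_def a2_def b1_def b2_def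
      by (simp_all add: qnorm2_nonneg)
    show ?thesis
    proof (cases "a1 * b1 > 0")
      case True
      then have "a1 > 0" "b1 > 0" using nn by (auto simp: zero_less_mult_iff)
      then show ?thesis using pick[OF h1_herm h1_tr[OF PQ1(1)] h1_herm h1_tr[OF Qtr]] e1
        unfolding a1_def b1_def by blast
    next
      case False
      then have "a2 * b2 > 0" using e3 nn by (smt (verit) mult_nonneg_nonneg)
      then have "a2 > 0" "b2 > 0" using nn by (auto simp: zero_less_mult_iff)
      then show ?thesis using pick[OF h2_herm h2_tr[OF PQ1(1)] h2_herm h2_tr[OF Qtr]] e2
        unfolding a2_def b2_def by blast
    qed
  qed
  show ?thesis using part1 part2 part3 mc by simp
qed

end
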